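(* For all $i\in\mathbb{Z}$, $\beta\in\Bbbk^*$ and $0\le p\le k$, $$\lambda_\beta^i(k,p)=\binom{k}{p}_\gamma\gamma^{-(k-p)p}\prod_{l=p+1}^kR_\beta^i(l,0),$$ where the empty product (for $p=k$) equals $1$.
   Context: $\Bbbk$ is an algebraically closed field of characteristic $0$, $n\ge1$, $\gamma\in\Bbbk$ a primitive $n$-th root of unity. $\binom{k}{p}_\gamma$ denotes the Gaussian ($\gamma$-)binomial coefficient. Define $R_\beta^i(k,l)=\beta\gamma^{-l}-\gamma^{k-1-i}$ for $0\le l<k$ and $R_\beta^i(k,k)=1$. Define $\lambda_\beta^i(0,0)=1$, and for $k\ge1$: $\lambda_\beta^i(k,0)=R_\beta^i(k,0)\lambda_\beta^i(k-1,0)$, $\lambda_\beta^i(k,l)=R_\beta^i(k,l)\lambda_\beta^i(k-1,l)+\lambda_\beta^i(k-1,l-1)$ for $0<l<k$, $\lambda_\beta^i(k,k)=1$. *)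

theory Defs
  imports "HOL-Computational_Algebra.Polynomial"
begin

text \<open>Gaussian (q-)binomial coefficient, defined by the q-Pascal recursion
  (valid for any q, including roots of unity).\<close>
fun qbinom :: "'a::comm_ring_1 \<Rightarrow> nat \<Rightarrow> nat \<Rightarrow> 'a" where
  "qbinom q k 0 = 1"
| "qbinom q 0 (Suc p) = 0"
| "qbinom q (Suc k) (Suc p) = qbinom q k p + q ^ (Suc p) * qbinom q k (Suc p)"

definition Rfun :: "'a::field \<Rightarrow> 'a \<Rightarrow> int \<Rightarrow> nat \<Rightarrow> nat \<Rightarrow> 'a" where
  "Rfun \<gamma> \<beta> i k l = (if l < k then \<beta> * \<gamma> powi (- int l) - \<gamma> powi (int k - 1 - i) else 1)"

fun lam :: "'a::field \<Rightarrow> 'a \<Rightarrow> int \<Rightarrow> nat \<Rightarrow> nat \<Rightarrow> 'a" where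
  "lam \<gamma> \<beta> i 0 l = (if l = 0 then 1 else 0)"
| "lam \<gamma> \<beta> i (Suc k) l =
     (if l = Suc k then 1
      else if l = 0 then Rfun \<gamma> \<beta> i (Suc k) 0 * lam \<gamma> \<beta> i k 0
      else if l < Suc k then Rfun \<gamma> \<beta> i (Suc k) l * lam \<gamma> \<beta> i k l + lam \<gamma> \<beta> i k (l - 1)
      else 0)"

definition primitive_root :: "'a::comm_ring_1 \<Rightarrow> nat \<Rightarrow> bool" where
  "primitive_root \<gamma> n \<longleftrightarrow> \<gamma> ^ n = 1 \<and> (\<forall>m. 0 < m \<and> m < n \<longrightarrow> \<gamma> ^ m \<noteq> 1)"

definition alg_closed_field :: "'a::field itself \<Rightarrow> bool" where
  "alg_closed_field _ \<longleftrightarrow> (\<forall>f::'a poly. 0 < degree f \<longrightarrow> (\<exists>x. poly f x = 0))"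

end

theory Submission
  imports Defs
begin


lemma qbinom_gt: "k < p \<Longrightarrow> qbinom q k p = 0"
  by (induction q k p arbitrary: rule: qbinom.induct) auto

lemma qbinom_diag: "qbinom q k k = 1"
  by (induction k) (auto simp: qbinom_gt)

lemma qbinom_pascal2:
  "q ^ p * qbinom q (Suc k) (Suc p) = q ^ p * qbinom q k (Suc p) + q ^ k * qbinom q k p"
proof (induction k arbitrary: p)
  case 0
  then show ?case by (cases p) auto
next
  case (Suc k)
  show ?case
  proof (cases p)
    case 0
    have "qbinom q (Suc k) 1 = qbinom q k 1 + q ^ k" using Suc[of 0] by simp
    then show ?thesis using 0 by (simp add: algebra_simps)
  next
    case (Suc p')
    have I1: "q ^ p' * qbinom q (Suc k) (Suc p') = q ^ p' * qbinom q k (Suc p') + q ^ k * qbinom q k p'"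
      using Suc.IH[of p'] .
    have I2: "q ^ Suc p' * qbinom q (Suc k) (Suc (Suc p')) = q ^ Suc p' * qbinom q k (Suc (Suc p')) + q ^ k * qbinom q k (Suc p')"
      using Suc.IH[of "Suc p'"] .
    let ?a = "qbinom q k p'" and ?b = "qbinom q k (Suc p')" and ?d = "qbinom q k (Suc (Suc p'))"
    have I1': "q ^ p' * (?a + q ^ Suc p' * ?b) = q ^ p' * ?b + q ^ k * ?a" using I1 by simp
    have I2': "q ^ Suc p' * (?b + q ^ Suc (Suc p') * ?d) = q ^ Suc p' * ?d + q ^ k * ?b" using I2 by simp
    have E: "q ^ Suc p' * ((?a + q ^ Suc p' * ?b) + q ^ Suc (Suc p') * (?b + q ^ Suc (Suc p') * ?d))
       - (q ^ Suc p' * (?b + q ^ Suc (Suc p') * ?d) + q ^ Suc k * (?a + q ^ Suc p' * ?b))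
       = q * (q ^ p' * (?a + q ^ Suc p' * ?b) - (q ^ p' * ?b + q ^ k * ?a))
         + q ^ Suc (Suc p') * (q ^ Suc p' * (?b + q ^ Suc (Suc p') * ?d) - (q ^ Suc p' * ?d + q ^ k * ?b))"
      by (simp add: algebra_simps power_add)
    have "q ^ Suc p' * ((?a + q ^ Suc p' * ?b) + q ^ Suc (Suc p') * (?b + q ^ Suc (Suc p') * ?d))
       = q ^ Suc p' * (?b + q ^ Suc (Suc p') * ?d) + q ^ Suc k * (?a + q ^ Suc p' * ?b)"
      using E I1' I2' by simp
    then show ?thesis unfolding Suc by (simp only: qbinom.simps)
  qed
qed

lemma powi_negnat: "(g::'a::field) powi (- int m) = inverse (g ^ m)"
  by (simp add: power_int_minus)

lemma Rfun_simp:
  fixes g b :: "'a::field"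
  assumes "g \<noteq> 0" "l < K"
  shows "Rfun g b i K l = b * inverse (g ^ l) - g ^ (K - 1) * g powi (- i)"
proof -
  have e: "int K - 1 - i = int (K - 1) + (- i)" using assms by simp
  have "g powi (int K - 1 - i) = g powi (int (K - 1)) * g powi (- i)"
    unfolding e using assms(1) by (intro power_int_add) simp
  also have "g powi (int (K - 1)) = g ^ (K - 1)" by (rule power_int_of_nat)
  finally show ?thesis using assms by (simp add: Rfun_def powi_negnat)
qed

lemma main_aux:
  fixes g b :: "'a::field"
  assumes g: "g \<noteq> 0" and "p \<le> k"
  shows "lam g b i k p = qbinom g k p * inverse (g ^ ((k - p) * p)) * (\<Prod>l = p + 1..k. Rfun g b i l 0)"
  using assms(2)
proof (induction k arbitrary: p)
  case 0
  then show ?case by simp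
next
  case (Suc k)
  define c where "c = g powi (- i)"
  have R0: "\<And>K. 0 < K \<Longrightarrow> Rfun g b i K 0 = b - g ^ (K - 1) * c"
    using Rfun_simp[OF g] c_def by simp
  show ?case
  proof (cases "p = Suc k")
    case True
    then show ?thesis by (simp add: qbinom_diag)
  next
    case False
    show ?thesis
    proof (cases p)
      case 0
      have "(\<Prod>l = 1..Suc k. Rfun g b i l 0) = (\<Prod>l = 1..k. Rfun g b i l 0) * Rfun g b i (Suc k) 0"
        by simp
      then show ?thesis using 0 Suc.IH[of 0] by simp
    next
      case (Suc p')
      with False Suc.prems obtain j where kj: "k = Suc (p' + j)"
        by (metis add_Suc_right le_SucE less_imp_Suc_add Suc_le_lessD le_neq_implies_less)
      define A where "A = (\<Prod>l = p' + 2..k. Rfun g b i l 0)"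
      have P1: "(\<Prod>l = p' + 2..Suc k. Rfun g b i l 0) = A * Rfun g b i (Suc k) 0"
        unfolding A_def kj by simp
      have P2: "(\<Prod>l = p' + 1..k. Rfun g b i l 0) = Rfun g b i (Suc p') 0 * A"
        unfolding A_def kj by (simp add: prod.atLeast_Suc_atMost)
      have IH1: "lam g b i k (Suc p') = qbinom g k (Suc p') * inverse (g ^ (j * Suc p')) * A"
        using Suc.IH[of "Suc p'"] kj A_def by simp
      have IH2: "lam g b i k p' = qbinom g k p' * inverse (g ^ (Suc j * p')) * (Rfun g b i (Suc p') 0 * A)"
        using Suc.IH[of p'] kj P2 by simp
      have L: "lam g b i (Suc k) p = Rfun g b i (Suc k) (Suc p') * lam g b i k (Suc p') + lam g b i k p'"
        using Suc False Suc.prems by simp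
      have pas1: "qbinom g (Suc k) (Suc p') = qbinom g k p' + g ^ Suc p' * qbinom g k (Suc p')"
        by simp
      have pas2: "qbinom g (Suc k) (Suc p') = qbinom g k (Suc p') + g ^ Suc j * qbinom g k p'"
      proof -
        have "g ^ p' * qbinom g (Suc k) (Suc p') = g ^ p' * (qbinom g k (Suc p') + g ^ Suc j * qbinom g k p')"
          using qbinom_pascal2[of g p' k] kj by (simp add: algebra_simps power_add)
        then show ?thesis using g by simp
      qed
      have RK: "Rfun g b i (Suc k) (Suc p') = b * inverse (g ^ Suc p') - g ^ k * c"
        using Rfun_simp[OF g, of "Suc p'" "Suc k"] c_def kj by simp
      have RK0: "Rfun g b i (Suc k) 0 = b - g ^ k * c" using R0 by simp
      have Rp0: "Rfun g b i (Suc p') 0 = b - g ^ p' * c" using R0 by simp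
      have XS: "qbinom g (Suc k) (Suc p') * (b - g ^ k * c) =
         (qbinom g k (Suc p') + g ^ Suc j * qbinom g k p') * b - (qbinom g k p' + g ^ Suc p' * qbinom g k (Suc p')) * (g ^ k * c)"
        using pas1 pas2 by (metis right_diff_distrib mult.commute)
      have ex: "(Suc k - p) * p = Suc j * Suc p'" using Suc kj by simp
      have pp: "p + 1 = p' + 2" using Suc by simp
      have "lam g b i (Suc k) p = qbinom g (Suc k) (Suc p') * (b - g ^ k * c) * inverse (g ^ (Suc j * Suc p')) * A"
        unfolding L IH1 IH2 RK XS Rp0
        using g unfolding kj by (simp add: field_simps power_add power_mult_distrib)
      then show ?thesis unfolding ex pp P1 RK0 using Suc by (simp add: ac_simps)
    qed
  qed
qed

theorem proposition3p12:
  fixes \<gamma> \<beta> :: "'a::field_char_0" and n :: nat and i :: int and k p :: nat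
  assumes "alg_closed_field TYPE('a)"
    and "n \<ge> 1"
    and "primitive_root \<gamma> n"
    and "\<beta> \<noteq> 0"
    and "p \<le> k"
  shows "lam \<gamma> \<beta> i k p =
    qbinom \<gamma> k p * \<gamma> powi (- (int (k - p) * int p)) * (\<Prod>l = p + 1..k. Rfun \<gamma> \<beta> i l 0)"
proof -
  have g: "\<gamma> \<noteq> 0"
  proof
    assume "\<gamma> = 0"
    then have "\<gamma> ^ n = 0" using assms(2) by simp
    then show False using assms(3) unfolding primitive_root_def by simp
  qed
  have "\<gamma> powi (- (int (k - p) * int p)) = inverse (\<gamma> ^ ((k - p) * p))"
    using powi_negnat[of \<gamma> "(k - p) * p"] by simp
  then show ?thesis using main_aux[OF g assms(5), of \<beta> i] by simp
qed

end
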